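(* Let $\ell\in(\Sigma^S_{n,2d})^*$ and let $W_\ell\subseteq H_{n,d}$ be the kernel of the quadratic form $Q_\ell$. Then $\ell$ spans an extreme ray of $(\Sigma^S_{n,2d})^*$ if and only if $W_\ell^{<2>}$ is a (linear) hyperplane in $H^S_{n,2d}$.
   Context: $H_{n,d}$ is the space of real forms of degree $d$ in $n$ variables and $H^S_{n,2d}$ the symmetric forms of degree $2d$; $\Sigma^S_{n,2d}$ is the cone of symmetric sums of squares of real forms and $(\Sigma^S_{n,2d})^*=\{\ell\in (H^S_{n,2d})^*:\ell(f)\ge 0\ \forall f\in\Sigma^S_{n,2d}\}$. $\operatorname{Sym}(f)=\frac1{n!}\sum_{\sigma\in\mathcal{S}_n}\sigma(f)$ with $\mathcal{S}_n$ permuting variables. $Q_\ell(f)=\ell(\operatorname{Sym}(f^2))$ for $f\in H_{n,d}$; its kernel is $\{p\in H_{n,d}:\ell(\operatorname{Sym}(pq))=0\ \forall q\in H_{n,d}\}$. For a linear subspace $W\subseteq H_{n,d}$, $W^{<2>}=\{\operatorname{Sym}(\sum_i f_ig_i): f_i\in W,\ g_i\in H_{n,d}\}\subseteq H^S_{n,2d}$. *)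

theory Defs
  imports Complex_Main "HOL-Library.Poly_Mapping" "HOL-Combinatorics.Permutations"
begin

text \<open>Real polynomials in the variables x_0, x_1, ...: a monomial is an exponent
  vector (finitely supported nat-valued map), a polynomial is a finitely supported coefficient function
  on monomials; the ring structure is the library's convolution product.\<close>

type_synonym mono = "nat \<Rightarrow>\<^sub>0 nat"
type_synonym rpoly = "mono \<Rightarrow>\<^sub>0 real"

definition mdeg :: "mono \<Rightarrow> nat" where
  "mdeg m = sum (Poly_Mapping.lookup m) (Poly_Mapping.keys m)"

definition forms :: "nat \<Rightarrow> nat \<Rightarrow> rpoly set" where
  "forms n d = {p. \<forall>m\<in>Poly_Mapping.keys p. Poly_Mapping.keys m \<subseteq> {0..<n} \<and> mdeg m = d}"

definition pscale :: "real \<Rightarrow> rpoly \<Rightarrow> rpoly" where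
  "pscale c p = Poly_Mapping.map (\<lambda>x. c * x) p"

text \<open>Action of a permutation of the variables: coefficient of the monomial m in
  perm_act s p is the coefficient of (m o s) in p.\<close>
definition perm_act :: "(nat \<Rightarrow> nat) \<Rightarrow> rpoly \<Rightarrow> rpoly" where
  "perm_act s p = Poly_Mapping.map_key (Poly_Mapping.map_key s) p"

definition Sym :: "nat \<Rightarrow> rpoly \<Rightarrow> rpoly" where
  "Sym n p = pscale (1 / fact n) (\<Sum>s\<in>{s. s permutes {0..<n}}. perm_act s p)"

definition sym_forms :: "nat \<Rightarrow> nat \<Rightarrow> rpoly set" where
  "sym_forms n k = {p \<in> forms n k. \<forall>s. s permutes {0..<n} \<longrightarrow> perm_act s p = p}"

definition sym_sos :: "nat \<Rightarrow> nat \<Rightarrow> rpoly set" where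
  "sym_sos n d = {f \<in> sym_forms n (2*d).
      \<exists>gs. set gs \<subseteq> forms n d \<and> f = sum_list (map (\<lambda>g. g * g) gs)}"

definition linear_on :: "rpoly set \<Rightarrow> (rpoly \<Rightarrow> real) \<Rightarrow> bool" where
  "linear_on S l \<longleftrightarrow> (\<forall>x\<in>S. \<forall>y\<in>S. l (x + y) = l x + l y) \<and>
                      (\<forall>c. \<forall>x\<in>S. l (pscale c x) = c * l x)"

text \<open>(\<Sigma>^S_{n,2d})^*: linear functionals on H^S_{n,2d} nonnegative on \<Sigma>^S_{n,2d}.
  Functionals are functions rpoly \<Rightarrow> real; only their values on H^S_{n,2d} matter.\<close>
definition dual_cone :: "nat \<Rightarrow> nat \<Rightarrow> (rpoly \<Rightarrow> real) set" where
  "dual_cone n d = {l. linear_on (sym_forms n (2*d)) l \<and> (\<forall>f\<in>sym_sos n d. 0 \<le> l f)}"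

definition extreme_ray :: "rpoly set \<Rightarrow> (rpoly \<Rightarrow> real) set \<Rightarrow> (rpoly \<Rightarrow> real) \<Rightarrow> bool" where
  "extreme_ray V K l \<longleftrightarrow> l \<in> K \<and> (\<exists>f\<in>V. l f \<noteq> 0) \<and>
     (\<forall>l1\<in>K. \<forall>l2\<in>K. (\<forall>f\<in>V. l f = l1 f + l2 f) \<longrightarrow>
         (\<exists>c\<ge>0. \<forall>f\<in>V. l1 f = c * l f))"

text \<open>Kernel W_l of the quadratic form Q_l(f) = l(Sym(f^2)) on H_{n,d}.\<close>
definition qf_kernel :: "nat \<Rightarrow> nat \<Rightarrow> (rpoly \<Rightarrow> real) \<Rightarrow> rpoly set" where
  "qf_kernel n d l = {p \<in> forms n d. \<forall>q\<in>forms n d. l (Sym n (p * q)) = 0}"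

definition W2 :: "nat \<Rightarrow> nat \<Rightarrow> rpoly set \<Rightarrow> rpoly set" where
  "W2 n d W = {Sym n (sum_list (map (\<lambda>(f, g). f * g) fgs)) | fgs.
                 set fgs \<subseteq> W \<times> forms n d}"

definition hyperplane_in :: "rpoly set \<Rightarrow> rpoly set \<Rightarrow> bool" where
  "hyperplane_in V U \<longleftrightarrow>
     (\<exists>\<phi>. linear_on V \<phi> \<and> (\<exists>f\<in>V. \<phi> f \<noteq> 0) \<and> U = {f \<in> V. \<phi> f = 0})"

end

theory Submission
  imports Defs
begin


lemma pscale_conv: "pscale c p = Poly_Mapping.single 0 c * p"
  unfolding pscale_def using mult_map_scale_conv_mult[of c p] by (simp add: fun_eq_iff)

lemma lookup_pscale[simp]: "Poly_Mapping.lookup (pscale c p) m = c * Poly_Mapping.lookup p m"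
  unfolding pscale_def by (simp add: Poly_Mapping.map.rep_eq when_def)

interpretation PV: vector_space pscale
  by unfold_locales (simp_all add: pscale_conv algebra_simps single_add mult_single flip: mult.assoc)

lemma PVP: "vector_space_pair pscale ((*)::real\<Rightarrow>real\<Rightarrow>real)"
  by unfold_locales (simp_all add: algebra_simps)

lemma pscale_mult_left: "pscale c p * q = pscale c (p * q)"
  by (simp add: pscale_conv mult.assoc)
lemma pscale_mult_right: "p * pscale c q = pscale c (p * q)"
  by (simp add: pscale_conv mult.left_commute)



lemma keys_add_nat: "Poly_Mapping.keys (a + b :: mono) = Poly_Mapping.keys a \<union> Poly_Mapping.keys b"
  by (auto simp: in_keys_iff lookup_add)

lemma mdeg_sum: "finite S \<Longrightarrow> Poly_Mapping.keys m \<subseteq> S \<Longrightarrow> mdeg m = sum (Poly_Mapping.lookup m) S"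
  unfolding mdeg_def by (rule sum.mono_neutral_left) (auto simp: in_keys_iff)

lemma mdeg_add: "mdeg (a + b) = mdeg a + mdeg b"
proof -
  let ?S = "Poly_Mapping.keys a \<union> Poly_Mapping.keys b"
  have "mdeg (a+b) = sum (Poly_Mapping.lookup (a+b)) ?S"
    by (rule mdeg_sum) (auto simp: keys_add_nat)
  also have "\<dots> = sum (Poly_Mapping.lookup a) ?S + sum (Poly_Mapping.lookup b) ?S"
    by (simp add: lookup_add sum.distrib)
  also have "\<dots> = mdeg a + mdeg b"
    by (simp add: mdeg_sum[of ?S a] mdeg_sum[of ?S b])
  finally show ?thesis .
qed

lemma mdeg_zero[simp]: "mdeg 0 = 0" by (simp add: mdeg_def)
lemma mdeg_single[simp]: "mdeg (Poly_Mapping.single k (v::nat)) = v" by (simp add: mdeg_def)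
lemma mdeg_single1: "mdeg (Poly_Mapping.single k (1::nat)) = 1" by simp

lemma lookup_le_mdeg: "Poly_Mapping.lookup m k \<le> mdeg m"
proof (cases "k \<in> Poly_Mapping.keys m")
  case True
  then show ?thesis unfolding mdeg_def
    by (intro member_le_sum) auto
next
  case False then show ?thesis by (simp add: in_keys_iff)
qed

lemma mono_split:
  "mdeg m = a + b \<Longrightarrow> \<exists>m1 m2. m = m1 + m2 \<and> mdeg m1 = a \<and> mdeg m2 = b \<and>
     Poly_Mapping.keys m1 \<subseteq> Poly_Mapping.keys m \<and> Poly_Mapping.keys m2 \<subseteq> Poly_Mapping.keys m"
proof (induction a arbitrary: m)
  case 0
  then show ?case by (intro exI[of _ 0] exI[of _ m]) auto
next
  case (Suc a)
  then have "mdeg m \<noteq> 0" by simp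
  then obtain k where k: "k \<in> Poly_Mapping.keys m" unfolding mdeg_def
    by (metis sum.neutral in_keys_iff)
  define m' where "m' = m - Poly_Mapping.single k 1"
  have mm: "m = Poly_Mapping.single k 1 + m'"
    using k by (intro poly_mapping_eqI) (auto simp: m'_def lookup_add lookup_minus lookup_single when_def in_keys_iff)
  have "mdeg m = mdeg (Poly_Mapping.single k (1::nat)) + mdeg m'" using mm mdeg_add by metis
  then have "mdeg m' = a + b" using Suc.prems mdeg_single1[of k] by linarith
  from Suc.IH[OF this] obtain m1 m2 where h: "m' = m1 + m2" "mdeg m1 = a" "mdeg m2 = b"
    "Poly_Mapping.keys m1 \<subseteq> Poly_Mapping.keys m'" "Poly_Mapping.keys m2 \<subseteq> Poly_Mapping.keys m'"
    by blast
  have km': "Poly_Mapping.keys m' \<subseteq> Poly_Mapping.keys m" using mm keys_add_nat by auto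
  have e1: "m = (Poly_Mapping.single k 1 + m1) + m2" by (simp add: mm h(1) add.assoc)
  have e2: "mdeg (Poly_Mapping.single k 1 + m1) = Suc a" using mdeg_add[of "Poly_Mapping.single k 1" m1] h(2) by simp
  have e3: "Poly_Mapping.keys (Poly_Mapping.single k 1 + m1) \<subseteq> Poly_Mapping.keys m"
    using k h(4) km' by (auto simp: keys_add_nat)
  show ?case using e1 e2 e3 h(3,5) km' by blast
qed

lemma finite_monos: "finite {m::mono. Poly_Mapping.keys m \<subseteq> {0..<n} \<and> mdeg m = d}"
proof -
  let ?f = "\<lambda>m::mono. restrict (Poly_Mapping.lookup m) {0..<n}"
  have "?f ` {m. Poly_Mapping.keys m \<subseteq> {0..<n} \<and> mdeg m = d} \<subseteq> PiE {0..<n} (\<lambda>_. {0..d})"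
    using lookup_le_mdeg by (auto simp: PiE_def)
  moreover have "inj_on ?f {m. Poly_Mapping.keys m \<subseteq> {0..<n} \<and> mdeg m = d}"
  proof (rule inj_onI)
    fix x y assume x: "x \<in> {m. Poly_Mapping.keys m \<subseteq> {0..<n} \<and> mdeg m = d}"
      and y: "y \<in> {m. Poly_Mapping.keys m \<subseteq> {0..<n} \<and> mdeg m = d}" and e: "?f x = ?f y"
    show "x = y"
    proof (rule poly_mapping_eqI)
      fix k show "Poly_Mapping.lookup x k = Poly_Mapping.lookup y k"
      proof (cases "k < n")
        case True then show ?thesis using fun_cong[OF e, of k] by simp
      next
        case False
        then have "k \<notin> Poly_Mapping.keys x" "k \<notin> Poly_Mapping.keys y" using x y by auto
        then show ?thesis by (simp add: in_keys_iff)
      qed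
    qed
  qed
  ultimately show ?thesis
    by (meson finite_PiE finite_atLeastAtMost finite_atLeastLessThan finite_imageD finite_subset)
qed

lemma poly_monomials: "p = (\<Sum>m\<in>Poly_Mapping.keys p. Poly_Mapping.single m (Poly_Mapping.lookup p m))"
  by (rule poly_mapping_eqI) (auto simp: lookup_sum lookup_single when_def in_keys_iff)

lemma keys_pscale: "Poly_Mapping.keys (pscale c p) \<subseteq> Poly_Mapping.keys p"
  by (auto simp: in_keys_iff)

lemma forms_zero[simp]: "0 \<in> forms n d" by (simp add: forms_def)
lemma forms_add: "p \<in> forms n d \<Longrightarrow> q \<in> forms n d \<Longrightarrow> p + q \<in> forms n d"
  using keys_add[of p q] by (auto simp: forms_def)
lemma forms_pscale: "p \<in> forms n d \<Longrightarrow> pscale c p \<in> forms n d"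
  using keys_pscale[of c p] by (auto simp: forms_def)
lemma forms_subspace: "PV.subspace (forms n d)"
  by (auto simp: PV.subspace_def forms_add forms_pscale)
lemma forms_neg: "p \<in> forms n d \<Longrightarrow> - p \<in> forms n d"
  using PV.subspace_neg[OF forms_subspace] by blast
lemma forms_diff: "p \<in> forms n d \<Longrightarrow> q \<in> forms n d \<Longrightarrow> p - q \<in> forms n d"
  using PV.subspace_diff[OF forms_subspace] by blast
lemma forms_sum_list: "set xs \<subseteq> forms n d \<Longrightarrow> sum_list xs \<in> forms n d"
  by (induction xs) (auto simp: forms_add)
lemma forms_sum: "(\<And>x. x \<in> A \<Longrightarrow> f x \<in> forms n d) \<Longrightarrow> sum f A \<in> forms n d"
  using PV.subspace_sum[OF forms_subspace] by blast

lemma forms_mult: "p \<in> forms n a \<Longrightarrow> q \<in> forms n b \<Longrightarrow> p * q \<in> forms n (a + b)"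
  using keys_mult[of p q] by (fastforce simp: forms_def keys_add_nat mdeg_add)

lemma single_in_forms: "Poly_Mapping.keys m \<subseteq> {0..<n} \<Longrightarrow> mdeg m = d \<Longrightarrow> Poly_Mapping.single m c \<in> forms n d"
  by (auto simp: forms_def)

lemma forms_span: "\<exists>es. set es \<subseteq> forms n d \<and> forms n d \<subseteq> PV.span (set es)"
proof -
  let ?M = "{m::mono. Poly_Mapping.keys m \<subseteq> {0..<n} \<and> mdeg m = d}"
  obtain ms where ms: "set ms = ?M" using finite_list[OF finite_monos] by blast
  let ?es = "map (\<lambda>m. Poly_Mapping.single m (1::real)) ms"
  have "p \<in> PV.span (set ?es)" if p: "p \<in> forms n d" for p
  proof -
    have "p = (\<Sum>m\<in>Poly_Mapping.keys p. Poly_Mapping.single m (Poly_Mapping.lookup p m))"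
      by (rule poly_monomials)
    also have "\<dots> = (\<Sum>m\<in>Poly_Mapping.keys p. pscale (Poly_Mapping.lookup p m) (Poly_Mapping.single m 1))"
      by (intro sum.cong refl) (simp add: pscale_conv mult_single)
    also have "\<dots> \<in> PV.span (set ?es)"
    proof (intro PV.span_sum PV.span_scale PV.span_base)
      fix m assume "m \<in> Poly_Mapping.keys p"
      then have "m \<in> set ms" using p ms by (auto simp: forms_def)
      then show "Poly_Mapping.single m 1 \<in> set ?es" by simp
    qed
    finally show ?thesis .
  qed
  moreover have "set ?es \<subseteq> forms n d" using ms by (auto intro: single_in_forms)
  ultimately show ?thesis by blast
qed

lemma forms_as_products:
  assumes "h \<in> forms n (2*d)"
  shows "\<exists>fgs. set fgs \<subseteq> forms n d \<times> forms n d \<and> h = sum_list (map (\<lambda>(f,g). f * g) fgs)"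
proof -
  have ex: "\<exists>fg. fg \<in> forms n d \<times> forms n d \<and> Poly_Mapping.single m (Poly_Mapping.lookup h m) = fst fg * snd fg"
    if m: "m \<in> Poly_Mapping.keys h" for m
  proof -
    have "mdeg m = d + d" "Poly_Mapping.keys m \<subseteq> {0..<n}" using assms m by (auto simp: forms_def)
    from mono_split[OF this(1)] obtain m1 m2 where mm: "m = m1 + m2" "mdeg m1 = d" "mdeg m2 = d"
      "Poly_Mapping.keys m1 \<subseteq> Poly_Mapping.keys m" "Poly_Mapping.keys m2 \<subseteq> Poly_Mapping.keys m" by blast
    have "Poly_Mapping.single m1 (Poly_Mapping.lookup h m) \<in> forms n d"
      using mm \<open>Poly_Mapping.keys m \<subseteq> {0..<n}\<close> by (intro single_in_forms) auto
    moreover have "Poly_Mapping.single m2 (1::real) \<in> forms n d"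
      using mm \<open>Poly_Mapping.keys m \<subseteq> {0..<n}\<close> by (intro single_in_forms) auto
    moreover have "Poly_Mapping.single m (Poly_Mapping.lookup h m) =
        Poly_Mapping.single m1 (Poly_Mapping.lookup h m) * Poly_Mapping.single m2 1"
      by (simp add: mult_single mm(1))
    ultimately show ?thesis by (intro exI[of _ "(Poly_Mapping.single m1 (Poly_Mapping.lookup h m), Poly_Mapping.single m2 1)"]) simp
  qed
  have "\<forall>m\<in>Poly_Mapping.keys h. \<exists>fg. fg \<in> forms n d \<times> forms n d \<and> Poly_Mapping.single m (Poly_Mapping.lookup h m) = fst fg * snd fg"
    by (rule ballI) (rule ex)
  from bchoice[OF this] obtain FG where FG: "\<forall>m\<in>Poly_Mapping.keys h. FG m \<in> forms n d \<times> forms n d \<and>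
      Poly_Mapping.single m (Poly_Mapping.lookup h m) = fst (FG m) * snd (FG m)"
    by (elim exE)
  obtain ms where ms: "set ms = Poly_Mapping.keys h" "distinct ms"
    using finite_distinct_list[OF finite_keys[of h]] by (elim exE conjE)
  show ?thesis
  proof (intro exI conjI)
    show "set (map FG ms) \<subseteq> forms n d \<times> forms n d" using ms FG by auto
    have "h = (\<Sum>m\<in>Poly_Mapping.keys h. Poly_Mapping.single m (Poly_Mapping.lookup h m))"
      by (rule poly_monomials)
    also have "\<dots> = (\<Sum>m\<in>Poly_Mapping.keys h. fst (FG m) * snd (FG m))"
      by (intro sum.cong refl) (use FG in blast)
    also have "\<dots> = sum_list (map (\<lambda>m. fst (FG m) * snd (FG m)) ms)" using ms by (simp add: sum_list_distinct_conv_sum_set)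
    also have "\<dots> = sum_list (map (\<lambda>(f,g). f * g) (map FG ms))" by (simp add: o_def case_prod_beta)
    finally show "h = sum_list (map (\<lambda>(f,g). f * g) (map FG ms))" .
  qed
qed



lemma lookup_map_key: "inj f \<Longrightarrow> Poly_Mapping.lookup (Poly_Mapping.map_key f p) k = Poly_Mapping.lookup p (f k)"
  by (simp add: Poly_Mapping.map_key.rep_eq)

lemma perm_bij: "s permutes {0..<n} \<Longrightarrow> bij s" using permutes_bij by blast
lemma perm_inj: "s permutes {0..<n} \<Longrightarrow> inj s" using permutes_inj by blast

lemma mk_compose: "inj s \<Longrightarrow> inj t \<Longrightarrow> Poly_Mapping.map_key s (Poly_Mapping.map_key t (m::mono)) = Poly_Mapping.map_key (t \<circ> s) m"
  by (rule map_key_compose)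

lemma mk_bij:
  assumes "s permutes {0..<n}"
  shows "bij (Poly_Mapping.map_key s :: mono \<Rightarrow> mono)"
proof -
  have i: "inj s" "inj (inv s)" using assms by (auto intro: permutes_inj permutes_inv)
  have "Poly_Mapping.map_key s (Poly_Mapping.map_key (inv s) m) = m" for m :: mono
    using i by (simp add: mk_compose permutes_inv_o(2)[OF assms] map_key_id[unfolded id_def[symmetric]] id_def map_key_id)
  moreover have "Poly_Mapping.map_key (inv s) (Poly_Mapping.map_key s m) = m" for m :: mono
    using i by (simp add: mk_compose permutes_inv_o(1)[OF assms] id_def map_key_id)
  ultimately show ?thesis by (metis bij_betw_byWitness top_greatest image_subsetI UNIV_I)
qed

lemma mk_inj: "s permutes {0..<n} \<Longrightarrow> inj (Poly_Mapping.map_key s :: mono \<Rightarrow> mono)"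
  using mk_bij bij_is_inj by blast

lemma lookup_perm_act: "s permutes {0..<n} \<Longrightarrow>
   Poly_Mapping.lookup (perm_act s p) m = Poly_Mapping.lookup p (Poly_Mapping.map_key s m)"
  unfolding perm_act_def by (simp add: lookup_map_key mk_inj)

lemma mk_plus: "s permutes {0..<n} \<Longrightarrow> Poly_Mapping.map_key s (a + b :: mono) = Poly_Mapping.map_key s a + Poly_Mapping.map_key s b"
  using map_key_plus perm_inj by blast

lemma perm_act_add: "s permutes {0..<n} \<Longrightarrow> perm_act s (p + q) = perm_act s p + perm_act s q"
  by (rule poly_mapping_eqI) (simp add: lookup_perm_act lookup_add)
lemma perm_act_pscale: "s permutes {0..<n} \<Longrightarrow> perm_act s (pscale c p) = pscale c (perm_act s p)"
  by (rule poly_mapping_eqI) (simp add: lookup_perm_act)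
lemma perm_act_zero: "s permutes {0..<n} \<Longrightarrow> perm_act s 0 = 0"
  by (rule poly_mapping_eqI) (simp add: lookup_perm_act)
lemma perm_act_comp:
  assumes s: "s permutes {0..<n}" and t: "t permutes {0..<n}"
  shows "perm_act s (perm_act t p) = perm_act (s \<circ> t) p"
proof -
  have st: "s \<circ> t permutes {0..<n}" by (rule permutes_compose[OF t s])
  show ?thesis
    by (rule poly_mapping_eqI) (simp add: lookup_perm_act[OF s] lookup_perm_act[OF t] lookup_perm_act[OF st] mk_compose perm_inj[OF s] perm_inj[OF t])
qed
lemma mk_id: "Poly_Mapping.map_key (\<lambda>x. x) = (\<lambda>m::mono. m)"
  by (rule ext) (rule map_key_id)
lemma perm_act_id: "perm_act id p = p"
  unfolding perm_act_def id_def mk_id by (rule map_key_id)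

lemma perm_act_mult:
  assumes s: "s permutes {0..<n}"
  shows "perm_act s (p * q) = perm_act s p * perm_act s q"
proof (rule poly_mapping_eqI)
  fix m
  let ?g = "Poly_Mapping.map_key s :: mono \<Rightarrow> mono"
  have b: "bij ?g" by (rule mk_bij[OF s])
  have inner: "(\<Sum>r. Poly_Mapping.lookup q r when ?g m = ?g l + r) =
               (\<Sum>r. Poly_Mapping.lookup q (?g r) when m = l + r)" for l
  proof (rule Sum_any.reindex_cong[OF b])
    show "(\<lambda>r. Poly_Mapping.lookup q r when ?g m = ?g l + r) \<circ> ?g = (\<lambda>r. Poly_Mapping.lookup q (?g r) when m = l + r)"
      using bij_is_inj[OF b] by (auto simp: fun_eq_iff mk_plus[OF s, symmetric] inj_eq when_def)
  qed
  have "Poly_Mapping.lookup (perm_act s (p * q)) m =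
      (\<Sum>l. Poly_Mapping.lookup p l * (\<Sum>r. Poly_Mapping.lookup q r when ?g m = l + r))"
    by (simp add: lookup_perm_act[OF s] lookup_mult)
  also have "\<dots> = (\<Sum>l. Poly_Mapping.lookup p (?g l) * (\<Sum>r. Poly_Mapping.lookup q r when ?g m = ?g l + r))"
    by (rule Sum_any.reindex_cong[OF b]) (simp add: fun_eq_iff)
  also have "\<dots> = (\<Sum>l. Poly_Mapping.lookup p (?g l) * (\<Sum>r. Poly_Mapping.lookup q (?g r) when m = l + r))"
    by (simp add: inner)
  also have "\<dots> = Poly_Mapping.lookup (perm_act s p * perm_act s q) m"
    by (simp add: lookup_perm_act[OF s] lookup_mult)
  finally show "Poly_Mapping.lookup (perm_act s (p * q)) m = Poly_Mapping.lookup (perm_act s p * perm_act s q) m" .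
qed

lemma mdeg_map_key:
  assumes s: "s permutes {0..<n}"
  shows "mdeg (Poly_Mapping.map_key s m) = mdeg m"
proof -
  have "mdeg (Poly_Mapping.map_key s m) = sum (\<lambda>x. Poly_Mapping.lookup m (s x)) (s -` Poly_Mapping.keys m)"
    unfolding mdeg_def using perm_inj[OF s] by (simp add: keys_map_key lookup_map_key o_def)
  also have "\<dots> = mdeg m" unfolding mdeg_def
  proof (rule sum.reindex_bij_betw)
    show "bij_betw s (s -` Poly_Mapping.keys m) (Poly_Mapping.keys m)"
      using perm_bij[OF s] by (auto simp: bij_betw_def bij_def intro: inj_on_subset)
  qed
  finally show ?thesis .
qed

lemma perm_act_forms:
  assumes s: "s permutes {0..<n}" and p: "p \<in> forms n d"
  shows "perm_act s p \<in> forms n d"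
  unfolding forms_def
proof safe
  fix m assume m: "m \<in> Poly_Mapping.keys (perm_act s p)"
  then have m': "Poly_Mapping.map_key s m \<in> Poly_Mapping.keys p"
    by (simp add: in_keys_iff lookup_perm_act[OF s])
  then have k: "Poly_Mapping.keys (Poly_Mapping.map_key s m) \<subseteq> {0..<n}" and dg: "mdeg (Poly_Mapping.map_key s m) = d"
    using p by (auto simp: forms_def)
  show "mdeg m = d" using dg mdeg_map_key[OF s] by simp
  fix k assume "k \<in> Poly_Mapping.keys m"
  then have "inv s k \<in> Poly_Mapping.keys (Poly_Mapping.map_key s m)"
    using perm_inj[OF s] permutes_inverses(1)[OF s] by (simp add: keys_map_key)
  then have "inv s k \<in> {0..<n}" using k by blast
  then have "s (inv s k) \<in> {0..<n}" using permutes_in_image[OF s] by blast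
  then show "k \<in> {0..<n}" using permutes_inverses(1)[OF s] by simp
qed



abbreviation Perms :: "nat \<Rightarrow> (nat \<Rightarrow> nat) set" where "Perms n \<equiv> {s. s permutes {0..<n}}"

lemma finite_Perms: "finite (Perms n)" by (rule finite_permutations) simp
lemma card_Perms: "card (Perms n) = fact n" by (rule card_permutations) auto

lemma perm_act_sum: "s permutes {0..<n} \<Longrightarrow> perm_act s (sum f A) = (\<Sum>x\<in>A. perm_act s (f x))"
  by (induction A rule: infinite_finite_induct) (auto simp: perm_act_zero perm_act_add)

lemma Sym_add: "Sym n (p + q) = Sym n p + Sym n q"
  unfolding Sym_def by (simp add: perm_act_add sum.distrib PV.scale_right_distrib)
lemma Sym_pscale: "Sym n (pscale c p) = pscale c (Sym n p)"
  unfolding Sym_def by (simp add: perm_act_pscale PV.scale_sum_right mult.commute)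
lemma Sym_zero[simp]: "Sym n 0 = 0"
  unfolding Sym_def by (simp add: perm_act_zero)
lemma Sym_sum_list: "Sym n (sum_list xs) = sum_list (map (Sym n) xs)"
  by (induction xs) (auto simp: Sym_add)

lemma Sym_forms: "p \<in> forms n k \<Longrightarrow> Sym n p \<in> forms n k"
  unfolding Sym_def by (intro forms_pscale forms_sum perm_act_forms) auto

lemma perm_act_Sym:
  assumes t: "t permutes {0..<n}"
  shows "perm_act t (Sym n p) = Sym n p"
proof -
  have "perm_act t (\<Sum>s\<in>Perms n. perm_act s p) = (\<Sum>s\<in>Perms n. perm_act (t \<circ> s) p)"
    using t by (simp add: perm_act_sum perm_act_comp)
  also have "\<dots> = (\<Sum>s\<in>Perms n. perm_act s p)"
  proof (rule sum.reindex_bij_witness[of _ "\<lambda>s. inv t \<circ> s" "\<lambda>s. t \<circ> s"])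
    fix s assume "s \<in> Perms n"
    then show "inv t \<circ> (t \<circ> s) = s" "t \<circ> s \<in> Perms n"
      using t by (metis comp_assoc id_comp permutes_inv_o(2) t) (use t \<open>s \<in> Perms n\<close> in \<open>auto intro: permutes_compose\<close>)
  next
    fix s assume "s \<in> Perms n"
    then show "t \<circ> (inv t \<circ> s) = s" "inv t \<circ> s \<in> Perms n"
      using t by (metis comp_assoc id_comp permutes_inv_o(1) t) (use t \<open>s \<in> Perms n\<close> in \<open>auto intro: permutes_compose permutes_inv\<close>)
  qed simp
  finally show ?thesis unfolding Sym_def using t by (simp add: perm_act_pscale)
qed

lemma Sym_sym_forms: "p \<in> forms n k \<Longrightarrow> Sym n p \<in> sym_forms n k"
  by (simp add: sym_forms_def Sym_forms perm_act_Sym)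

lemma Sym_id:
  assumes "p \<in> sym_forms n k"
  shows "Sym n p = p"
proof -
  have "(\<Sum>s\<in>Perms n. perm_act s p) = (\<Sum>s\<in>Perms n. pscale 1 p)"
    using assms by (intro sum.cong) (auto simp: sym_forms_def)
  also have "\<dots> = pscale (\<Sum>s\<in>Perms n. 1) p"
    by (rule PV.scale_sum_left[symmetric])
  also have "\<dots> = pscale (real (card (Perms n))) p" by simp
  finally show ?thesis unfolding Sym_def by (simp add: card_Perms)
qed

lemma sym_forms_subspace: "PV.subspace (sym_forms n k)"
  unfolding PV.subspace_def sym_forms_def
  by (auto simp: forms_add forms_pscale perm_act_add perm_act_pscale perm_act_zero)

lemma sym_forms_sum_list: "set xs \<subseteq> sym_forms n k \<Longrightarrow> sum_list xs \<in> sym_forms n k"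
  using sym_forms_subspace[of n k] by (induction xs) (auto simp: PV.subspace_def)

lemma forms_dd: "p \<in> forms n d \<Longrightarrow> q \<in> forms n d \<Longrightarrow> p * q \<in> forms n (2*d)"
  using forms_mult[of p n d q d] by (simp add: mult_2)

lemma Sym_prod_V: "p \<in> forms n d \<Longrightarrow> q \<in> forms n d \<Longrightarrow> Sym n (p * q) \<in> sym_forms n (2*d)"
  by (intro Sym_sym_forms forms_dd)

lemma Sym_sq_sos:
  assumes g: "g \<in> forms n d"
  shows "Sym n (g * g) \<in> sym_sos n d"
proof -
  define c where "c = sqrt (1 / fact n)"
  have cc: "c * c = 1 / fact n" unfolding c_def by (simp add: real_sqrt_mult[symmetric])
  obtain ss where ss: "set ss = Perms n" "distinct ss"
    using finite_distinct_list[OF finite_Perms[of n]] by (elim exE conjE)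
  have "Sym n (g * g) = (\<Sum>s\<in>Perms n. pscale (c*c) (perm_act s g * perm_act s g))"
    unfolding Sym_def cc by (simp add: perm_act_mult PV.scale_sum_right)
  also have "\<dots> = (\<Sum>s\<in>Perms n. pscale c (perm_act s g) * pscale c (perm_act s g))"
    by (simp add: pscale_mult_left pscale_mult_right)
  also have "\<dots> = sum_list (map (\<lambda>h. h * h) (map (\<lambda>s. pscale c (perm_act s g)) ss))"
    using ss by (simp add: sum_list_distinct_conv_sum_set o_def)
  finally have e: "Sym n (g * g) = sum_list (map (\<lambda>h. h * h) (map (\<lambda>s. pscale c (perm_act s g)) ss))" .
  have "set (map (\<lambda>s. pscale c (perm_act s g)) ss) \<subseteq> forms n d"
    using ss g by (auto intro: forms_pscale perm_act_forms)
  then show ?thesis unfolding sym_sos_def using e Sym_prod_V[OF g g] by blast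
qed

lemma sym_sos_decomp:
  assumes "f \<in> sym_sos n d"
  shows "\<exists>gs. set gs \<subseteq> forms n d \<and> f = sum_list (map (\<lambda>g. Sym n (g * g)) gs)"
proof -
  from assms obtain gs where gs: "set gs \<subseteq> forms n d" "f = sum_list (map (\<lambda>g. g * g) gs)"
    and f: "f \<in> sym_forms n (2*d)" unfolding sym_sos_def by blast
  have "f = Sym n f" using Sym_id[OF f] by simp
  also have "\<dots> = sum_list (map (\<lambda>g. Sym n (g * g)) gs)" by (simp add: gs(2) Sym_sum_list o_def)
  finally show ?thesis using gs(1) by blast
qed



definition bilin :: "rpoly set \<Rightarrow> (rpoly \<Rightarrow> rpoly \<Rightarrow> real) \<Rightarrow> bool" where
  "bilin H B \<longleftrightarrow> (\<forall>x\<in>H. \<forall>y\<in>H. \<forall>z\<in>H. B (x + y) z = B x z + B y z) \<and>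
     (\<forall>c. \<forall>x\<in>H. \<forall>z\<in>H. B (pscale c x) z = c * B x z) \<and> (\<forall>x\<in>H. \<forall>y\<in>H. B x y = B y x)"

context
  fixes H B
  assumes H: "PV.subspace H" and B: "bilin H B"
begin

lemma bl_addL: "x \<in> H \<Longrightarrow> y \<in> H \<Longrightarrow> z \<in> H \<Longrightarrow> B (x + y) z = B x z + B y z"
  using B by (simp add: bilin_def)
lemma bl_scaleL: "x \<in> H \<Longrightarrow> z \<in> H \<Longrightarrow> B (pscale c x) z = c * B x z"
  using B by (simp add: bilin_def)
lemma bl_sym: "x \<in> H \<Longrightarrow> y \<in> H \<Longrightarrow> B x y = B y x"
  using B by (simp add: bilin_def)
lemma bl_addR: "x \<in> H \<Longrightarrow> y \<in> H \<Longrightarrow> z \<in> H \<Longrightarrow> B z (x + y) = B z x + B z y"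
proof -
  assume x: "x \<in> H" and y: "y \<in> H" and z: "z \<in> H"
  have xy: "x + y \<in> H" using H x y by (rule PV.subspace_add)
  have "B z (x + y) = B (x + y) z" using z xy by (rule bl_sym)
  also have "\<dots> = B x z + B y z" using x y z by (rule bl_addL)
  also have "\<dots> = B z x + B z y" using bl_sym[OF x z] bl_sym[OF y z] by simp
  finally show ?thesis .
qed
lemma bl_scaleR: "x \<in> H \<Longrightarrow> z \<in> H \<Longrightarrow> B z (pscale c x) = c * B z x"
proof -
  assume x: "x \<in> H" and z: "z \<in> H"
  have cx: "pscale c x \<in> H" using H x by (rule PV.subspace_scale)
  have "B z (pscale c x) = B (pscale c x) z" using z cx by (rule bl_sym)
  also have "\<dots> = c * B x z" using x z by (rule bl_scaleL)
  also have "\<dots> = c * B z x" using bl_sym[OF x z] by simp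
  finally show ?thesis .
qed
lemma bl_zeroL: "z \<in> H \<Longrightarrow> B 0 z = 0"
proof -
  assume z: "z \<in> H"
  have 0: "0 \<in> H" using H by (rule PV.subspace_0)
  have "B (pscale 0 0) z = 0 * B 0 z" using 0 z by (rule bl_scaleL)
  then show ?thesis by simp
qed

lemma bl_expand:
  assumes h: "h \<in> H" and e: "e \<in> H"
  shows "B (h + pscale k e) (h + pscale k e) = B h h + 2 * k * B e h + k^2 * B e e"
proof -
  have ke: "pscale k e \<in> H" using H e by (rule PV.subspace_scale)
  have hke: "h + pscale k e \<in> H" using H h ke by (rule PV.subspace_add)
  have 1: "B (h + pscale k e) (h + pscale k e) = B h (h + pscale k e) + B (pscale k e) (h + pscale k e)"
    using h ke hke by (rule bl_addL)
  have 2: "B h (h + pscale k e) = B h h + B h (pscale k e)" using h ke h by (rule bl_addR)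
  have 3: "B (pscale k e) (h + pscale k e) = B (pscale k e) h + B (pscale k e) (pscale k e)"
    using h ke ke by (rule bl_addR)
  have 4: "B (pscale k e) h = k * B e h" using e h by (rule bl_scaleL)
  have 5: "B h (pscale k e) = k * B h e" using e h by (rule bl_scaleR)
  have 6: "B (pscale k e) (pscale k e) = k * B e (pscale k e)" using e ke by (rule bl_scaleL)
  have 7: "B e (pscale k e) = k * B e e" using e e by (rule bl_scaleR)
  have 8: "B h e = B e h" using h e by (rule bl_sym)
  show ?thesis unfolding 1 2 3 4 5 6 7 8 by algebra
qed

end

lemma psd_kernel:
  assumes H: "PV.subspace H" and Q: "bilin H Q" and psd: "\<forall>x\<in>H. Q x x \<ge> 0"
    and w: "w \<in> H" and ww: "Q w w = 0" and x: "x \<in> H"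
  shows "Q w x = 0"
proof (rule ccontr)
  assume ne: "Q w x \<noteq> 0"
  define a where "a = Q w x"
  define q where "q = Q x x"
  have q0: "q \<ge> 0" using psd x by (simp add: q_def)
  define r where "r = q + 1"
  have r: "r > 0" "r \<noteq> 0" using q0 by (auto simp: r_def)
  have qr: "q = r - 1" by (simp add: r_def)
  define t where "t = - a / r"
  have "Q (w + pscale t x) (w + pscale t x) = Q w w + 2 * t * Q x w + t^2 * Q x x"
    by (rule bl_expand[OF H Q w x])
  also have "\<dots> = 2 * t * a + t^2 * q" using ww bl_sym[OF H Q x w] by (simp add: a_def q_def)
  also have "\<dots> = a^2 * (- r - 1) / r^2"
    unfolding qr t_def using r by (simp add: field_simps power2_eq_square)
  also have "\<dots> < 0" using ne r by (intro divide_neg_pos mult_pos_neg) (auto simp: a_def)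
  finally have "Q (w + pscale t x) (w + pscale t x) < 0" .
  moreover have "w + pscale t x \<in> H" using H w x by (simp add: PV.subspace_add PV.subspace_scale)
  ultimately show False using psd by fastforce
qed

lemma span_in_H: "PV.subspace H \<Longrightarrow> S \<subseteq> H \<Longrightarrow> PV.span S \<subseteq> H"
  by (rule PV.span_minimal)

lemma two_ab_le: assumes "a > 0" shows "2 * \<bar>k\<bar> * \<bar>b\<bar> \<le> k^2 * a + b^2 / (a::real)"
proof -
  have "0 \<le> (\<bar>k\<bar> * a - \<bar>b\<bar>)^2" by simp
  then have "2 * \<bar>k\<bar> * \<bar>b\<bar> * a \<le> k^2 * a * a + b^2"
    by (simp add: power2_eq_square algebra_simps abs_mult_self_eq)
  then show ?thesis using assms by (simp add: field_simps power2_eq_square)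
qed

lemma bound_lemma:
  "\<And>es B. length es = N \<Longrightarrow> PV.subspace H \<Longrightarrow> bilin H Q \<Longrightarrow> (\<forall>x\<in>H. Q x x \<ge> 0) \<Longrightarrow> set es \<subseteq> H \<Longrightarrow>
    bilin H B \<Longrightarrow> (\<forall>w\<in>H. Q w w = 0 \<longrightarrow> (\<forall>x\<in>H. B w x = 0)) \<Longrightarrow>
    \<exists>C. \<forall>g\<in>PV.span (set es). \<bar>B g g\<bar> \<le> C * Q g g"
proof (induction N)
  case 0
  then show ?case using bl_zeroL[of H B 0] by (intro exI[of _ 0]) (simp add: PV.subspace_0)
next
  case (Suc N es B)
  note H = Suc.prems(2) and Q = Suc.prems(3) and psd = Suc.prems(4) and B = Suc.prems(6) and ker = Suc.prems(7)
  from Suc.prems(1) obtain e rest where es: "es = e # rest" and len: "length rest = N"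
    by (cases es) auto
  have e: "e \<in> H" and rest: "set rest \<subseteq> H" using Suc.prems(5) es by auto
  show ?case
  proof (cases "Q e e = 0")
    case True
    have Qe: "Q e x = 0" if "x \<in> H" for x using psd_kernel[OF H Q psd e True that] .
    have Be: "B e x = 0" if "x \<in> H" for x using ker e True that by blast
    obtain C where C: "\<forall>g\<in>PV.span (set rest). \<bar>B g g\<bar> \<le> C * Q g g"
      using Suc.IH[OF len H Q psd rest B ker] by blast
    show ?thesis
    proof (intro exI ballI)
      fix g assume "g \<in> PV.span (set es)"
      then obtain k where hk: "g - pscale k e \<in> PV.span (set rest)"
        using es PV.span_insert[of e "set rest"] by auto
      define h where "h = g - pscale k e"
      have hH: "h \<in> H" using span_in_H[OF H rest] hk h_def by blast
      have g: "g = h + pscale k e" by (simp add: h_def)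
      have "\<bar>B g g\<bar> = \<bar>B h h\<bar>" unfolding g by (simp add: bl_expand[OF H B hH e] Be hH e)
      also have "\<dots> \<le> C * Q h h" using C hk h_def by blast
      also have "\<dots> = C * Q g g" unfolding g by (simp add: bl_expand[OF H Q hH e] Qe hH e)
      finally show "\<bar>B g g\<bar> \<le> C * Q g g" .
    qed
  next
    case False
    define a where "a = Q e e"
    have a: "a > 0" using False psd e by (simp add: a_def order_less_le)
    define rest' where "rest' = map (\<lambda>x. x - pscale (Q e x / a) e) rest"
    have rest'H: "set rest' \<subseteq> H" using rest e H
      by (auto simp: rest'_def PV.subspace_diff PV.subspace_scale)
    have orth: "Q e x = 0" if xr: "x \<in> set rest'" for x
    proof -
      obtain y where y: "y \<in> set rest" "x = y - pscale (Q e y / a) e" using xr by (auto simp: rest'_def)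
      have yH: "y \<in> H" using y rest by auto
      have x2: "x = y + pscale (- (Q e y / a)) e" using y by (simp add: PV.scale_minus_left)
      have "Q e (y + pscale c e) = Q e y + c * Q e e" for c
        using yH e H by (simp add: bl_addR[OF H Q] bl_scaleR[OF H Q] PV.subspace_scale)
      then have "Q e x = Q e y + (- (Q e y / a)) * Q e e" unfolding x2 .
      then show ?thesis using a by (simp add: a_def)
    qed
    have orth_span: "x \<in> H \<and> Q e x = 0" if "x \<in> PV.span (set rest')" for x
      using that
    proof (induction rule: PV.span_induct_alt)
      case base
      have "0 \<in> H" using H by (simp add: PV.subspace_0)
      then show ?case using bl_sym[OF H Q e, of 0] bl_zeroL[OF H Q e] by simp
    next
      case (step c x y)
      have xH: "x \<in> H" using step rest'H by auto
      have "Q e (pscale c x + y) = c * Q e x + Q e y"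
        using xH step e H by (simp add: bl_addR[OF H Q] bl_scaleR[OF H Q] PV.subspace_scale)
      then show ?case using orth[OF step(1)] step xH H by (simp add: PV.subspace_add PV.subspace_scale)
    qed
    have sub: "PV.span (set es) \<subseteq> PV.span (insert e (set rest'))"
    proof (rule PV.span_minimal)
      show "set es \<subseteq> PV.span (insert e (set rest'))"
      proof
        fix x assume "x \<in> set es"
        then consider "x = e" | "x \<in> set rest" using es by auto
        then show "x \<in> PV.span (insert e (set rest'))"
        proof cases
          case 1 then show ?thesis by (simp add: PV.span_base)
        next
          case 2
          then have "x - pscale (Q e x / a) e \<in> set rest'" by (auto simp: rest'_def)
          then have "(x - pscale (Q e x / a) e) + pscale (Q e x / a) e \<in> PV.span (insert e (set rest'))"
            by (intro PV.span_add PV.span_scale PV.span_base) auto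
          then show ?thesis by simp
        qed
      qed
    qed simp
    have len': "length rest' = N" using len by (simp add: rest'_def)
    obtain C where C: "\<forall>g\<in>PV.span (set rest'). \<bar>B g g\<bar> \<le> C * Q g g"
      using Suc.IH[OF len' H Q psd rest'H B ker] by blast
    define B2 where "B2 = (\<lambda>x y. B e x * B e y)"
    have B2: "bilin H B2" unfolding bilin_def B2_def
      using e by (auto simp: bl_addR[OF H B] bl_scaleR[OF H B] algebra_simps)
    have ker2: "\<forall>w\<in>H. Q w w = 0 \<longrightarrow> (\<forall>x\<in>H. B2 w x = 0)"
      using ker e by (auto simp: B2_def bl_sym[OF H B e])
    obtain D where D: "\<forall>g\<in>PV.span (set rest'). \<bar>B2 g g\<bar> \<le> D * Q g g"
      using Suc.IH[OF len' H Q psd rest'H B2 ker2] by blast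
    define C' where "C' = \<bar>C\<bar> + \<bar>D\<bar> / a + 1 + \<bar>B e e\<bar> / a"
    show ?thesis
    proof (intro exI ballI)
      fix g assume "g \<in> PV.span (set es)"
      then have "g \<in> PV.span (insert e (set rest'))" using sub by blast
      then obtain k where hk: "g - pscale k e \<in> PV.span (set rest')"
        using PV.span_insert[of e "set rest'"] by auto
      define h where "h = g - pscale k e"
      have hsp: "h \<in> PV.span (set rest')" using hk h_def by simp
      have hH: "h \<in> H" and Qeh: "Q e h = 0" using orth_span[OF hsp] by auto
      have g: "g = h + pscale k e" by (simp add: h_def)
      have qh: "Q h h \<ge> 0" using psd hH by auto
      have Qg: "Q g g = Q h h + k^2 * a" unfolding g by (simp add: bl_expand[OF H Q hH e] Qeh a_def)
      have Bg: "B g g = B h h + 2 * k * B e h + k^2 * B e e" unfolding g by (rule bl_expand[OF H B hH e])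
      have b1: "\<bar>B h h\<bar> \<le> \<bar>C\<bar> * Q h h"
      proof -
        have "\<bar>B h h\<bar> \<le> C * Q h h" using C hsp by blast
        also have "\<dots> \<le> \<bar>C\<bar> * Q h h" using qh by (intro mult_right_mono) auto
        finally show ?thesis .
      qed
      have b2: "(B e h)^2 \<le> \<bar>D\<bar> * Q h h"
      proof -
        have "(B e h)^2 = \<bar>B2 h h\<bar>" by (simp add: B2_def power2_eq_square)
        also have "\<dots> \<le> D * Q h h" using D hsp by blast
        also have "\<dots> \<le> \<bar>D\<bar> * Q h h" using qh by (intro mult_right_mono) auto
        finally show ?thesis .
      qed
      have b3: "2 * \<bar>k\<bar> * \<bar>B e h\<bar> \<le> k^2 * a + (B e h)^2 / a" by (rule two_ab_le[OF a])
      have b4: "(B e h)^2 / a \<le> \<bar>D\<bar> * Q h h / a" by (intro divide_right_mono b2) (use a in simp)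
      have t1: "\<bar>B g g\<bar> \<le> \<bar>B h h\<bar> + \<bar>2 * k * B e h\<bar> + \<bar>k^2 * B e e\<bar>"
        unfolding Bg by (rule order_trans[OF abs_triangle_ineq add_right_mono[OF abs_triangle_ineq]])
      have t2: "\<bar>2 * k * B e h\<bar> = 2 * \<bar>k\<bar> * \<bar>B e h\<bar>" by (simp add: abs_mult)
      have t3: "\<bar>k^2 * B e e\<bar> = k^2 * \<bar>B e e\<bar>" by (simp add: abs_mult)
      have "\<bar>B g g\<bar> \<le> \<bar>C\<bar> * Q h h + (k^2 * a + \<bar>D\<bar> * Q h h / a) + k^2 * \<bar>B e e\<bar>"
        using t1 t2 t3 b1 b3 b4 by linarith
      also have "\<dots> \<le> C' * Q g g"
      proof -
        have e1: "C' * Q g g = (\<bar>C\<bar> + \<bar>D\<bar> / a + 1 + \<bar>B e e\<bar> / a) * Q h h + ((\<bar>C\<bar> + \<bar>D\<bar> / a) * (k^2 * a) + k^2 * a + k^2 * \<bar>B e e\<bar>)"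
          using a unfolding C'_def Qg by (simp add: field_simps)
        have e2: "(\<bar>C\<bar> + \<bar>D\<bar> / a + 1 + \<bar>B e e\<bar> / a) * Q h h = \<bar>C\<bar> * Q h h + \<bar>D\<bar> * Q h h / a + (1 + \<bar>B e e\<bar> / a) * Q h h"
          by (simp add: algebra_simps)
        have p1: "0 \<le> (1 + \<bar>B e e\<bar> / a) * Q h h" using qh a by simp
        have p2: "0 \<le> (\<bar>C\<bar> + \<bar>D\<bar> / a) * (k^2 * a)" using a by simp
        show ?thesis using e1 e2 p1 p2 by linarith
      qed
      finally show "\<bar>B g g\<bar> \<le> C' * Q g g" .
    qed
  qed
qed



lemma subspace_sum_list: "PV.subspace V \<Longrightarrow> set xs \<subseteq> V \<Longrightarrow> sum_list xs \<in> V"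
  by (induction xs) (auto simp: PV.subspace_0 PV.subspace_add)

lemma lin_zero: "linear_on V l \<Longrightarrow> PV.subspace V \<Longrightarrow> l 0 = 0"
proof -
  assume l: "linear_on V l" and V: "PV.subspace V"
  have "0 \<in> V" using V by (rule PV.subspace_0)
  then have "l (pscale 0 0) = 0 * l 0" using l unfolding linear_on_def by blast
  then show ?thesis by simp
qed

lemma lin_sum_list: "linear_on V l \<Longrightarrow> PV.subspace V \<Longrightarrow> set xs \<subseteq> V \<Longrightarrow> l (sum_list xs) = sum_list (map l xs)"
proof (induction xs)
  case Nil then show ?case using lin_zero by simp
next
  case (Cons x xs)
  have "sum_list xs \<in> V" using Cons.prems by (intro subspace_sum_list) auto
  then show ?case using Cons by (simp add: linear_on_def)
qed

lemma sum_list_zeros: "(\<And>x. x \<in> set xs \<Longrightarrow> f x = (0::real)) \<Longrightarrow> sum_list (map f xs) = 0"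
  by (induction xs) auto

lemma bilin_of_lin:
  assumes l: "linear_on (sym_forms n (2*d)) l"
  shows "bilin (forms n d) (\<lambda>p q. l (Sym n (p * q)))"
  unfolding bilin_def
proof (intro conjI ballI allI)
  fix x y z assume x: "x \<in> forms n d" and y: "y \<in> forms n d" and z: "z \<in> forms n d"
  have "Sym n ((x + y) * z) = Sym n (x * z) + Sym n (y * z)" by (simp add: distrib_right Sym_add)
  then show "l (Sym n ((x + y) * z)) = l (Sym n (x * z)) + l (Sym n (y * z))"
    using l Sym_prod_V[OF x z] Sym_prod_V[OF y z] by (simp add: linear_on_def)
next
  fix c x z assume x: "x \<in> forms n d" and z: "z \<in> forms n d"
  have "Sym n (pscale c x * z) = pscale c (Sym n (x * z))" by (simp add: pscale_mult_left Sym_pscale)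
  then show "l (Sym n (pscale c x * z)) = c * l (Sym n (x * z))"
    using l Sym_prod_V[OF x z] by (simp add: linear_on_def)
next
  fix x y show "l (Sym n (x * y)) = l (Sym n (y * x))" by (simp add: mult.commute)
qed

lemma Sym_W2_expand: "Sym n (sum_list (map (\<lambda>(f, g). f * g) fgs)) = sum_list (map (\<lambda>(f, g). Sym n (f * g)) fgs)"
  by (induction fgs) (auto simp: Sym_add)

lemma W2_sub_V:
  assumes "W \<subseteq> forms n d"
  shows "W2 n d W \<subseteq> sym_forms n (2*d)"
proof
  fix x assume "x \<in> W2 n d W"
  then obtain fgs where x: "x = Sym n (sum_list (map (\<lambda>(f, g). f * g) fgs))" and fgs: "set fgs \<subseteq> W \<times> forms n d"
    unfolding W2_def by blast
  have "sum_list (map (\<lambda>(f, g). f * g) fgs) \<in> forms n (2*d)"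
    using fgs assms by (intro forms_sum_list) (auto intro!: forms_dd)
  then show "x \<in> sym_forms n (2*d)" unfolding x by (rule Sym_sym_forms)
qed

lemma lin_vanish_W2:
  assumes l: "linear_on (sym_forms n (2*d)) l" and W: "W \<subseteq> forms n d"
    and van: "\<forall>f\<in>W. \<forall>g\<in>forms n d. l (Sym n (f * g)) = 0" and x: "x \<in> W2 n d W"
  shows "l x = 0"
proof -
  obtain fgs where xe: "x = Sym n (sum_list (map (\<lambda>(f, g). f * g) fgs))" and fgs: "set fgs \<subseteq> W \<times> forms n d"
    using x unfolding W2_def by blast
  have inV: "set (map (\<lambda>(f, g). Sym n (f * g)) fgs) \<subseteq> sym_forms n (2*d)"
    using fgs W by (auto intro!: Sym_prod_V)
  have "l x = sum_list (map l (map (\<lambda>(f, g). Sym n (f * g)) fgs))"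
    unfolding xe Sym_W2_expand by (rule lin_sum_list[OF l sym_forms_subspace inV])
  also have "\<dots> = 0" unfolding map_map
    by (rule sum_list_zeros) (use fgs van in auto)
  finally show ?thesis .
qed

lemma pscale_sum_list: "pscale c (sum_list xs) = sum_list (map (pscale c) xs)"
  by (induction xs) (auto simp: PV.scale_right_distrib)

lemma W2_subspace:
  assumes W: "W \<subseteq> forms n d"
  shows "PV.subspace (W2 n d W)"
proof (rule PV.subspaceI)
  show "0 \<in> W2 n d W" unfolding W2_def by (rule CollectI, rule exI[of _ "[]"]) simp
next
  fix x y assume x: "x \<in> W2 n d W" and y: "y \<in> W2 n d W"
  obtain fgs1 where 1: "x = Sym n (sum_list (map (\<lambda>(f, g). f * g) fgs1))" "set fgs1 \<subseteq> W \<times> forms n d"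
    using x unfolding W2_def by blast
  obtain fgs2 where 2: "y = Sym n (sum_list (map (\<lambda>(f, g). f * g) fgs2))" "set fgs2 \<subseteq> W \<times> forms n d"
    using y unfolding W2_def by blast
  have "x + y = Sym n (sum_list (map (\<lambda>(f, g). f * g) (fgs1 @ fgs2)))"
    unfolding 1 2 by (simp add: Sym_add)
  moreover have "set (fgs1 @ fgs2) \<subseteq> W \<times> forms n d" using 1 2 by auto
  ultimately show "x + y \<in> W2 n d W" unfolding W2_def by blast
next
  fix c x assume x: "x \<in> W2 n d W"
  obtain fgs where 1: "x = Sym n (sum_list (map (\<lambda>(f, g). f * g) fgs))" "set fgs \<subseteq> W \<times> forms n d"
    using x unfolding W2_def by blast
  let ?fgs = "map (\<lambda>(f, g). (f, pscale c g)) fgs"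
  have "pscale c x = Sym n (sum_list (map (\<lambda>(f, g). f * g) ?fgs))"
    unfolding 1 Sym_pscale[symmetric] pscale_sum_list
    by (simp add: o_def case_prod_beta pscale_mult_right)
  moreover have "set ?fgs \<subseteq> W \<times> forms n d" using 1 by (auto intro: forms_pscale)
  ultimately show "pscale c x \<in> W2 n d W" unfolding W2_def by blast
qed

lemma full_kernel:
  assumes full: "\<forall>p\<in>forms n d. \<forall>q\<in>forms n d. l (Sym n (p * q)) = 0"
  shows "sym_forms n (2*d) \<subseteq> W2 n d (qf_kernel n d l)"
proof
  fix h assume h: "h \<in> sym_forms n (2*d)"
  then have "h \<in> forms n (2*d)" by (simp add: sym_forms_def)
  from forms_as_products[OF this] obtain fgs where fgs: "set fgs \<subseteq> forms n d \<times> forms n d"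
    "h = sum_list (map (\<lambda>(f, g). f * g) fgs)" by (elim exE conjE)
  have "h = Sym n h" using Sym_id[OF h] by simp
  also have "\<dots> = Sym n (sum_list (map (\<lambda>(f, g). f * g) fgs))" using fgs(2) by simp
  finally have he: "h = Sym n (sum_list (map (\<lambda>(f, g). f * g) fgs))" .
  have "set fgs \<subseteq> qf_kernel n d l \<times> forms n d" using fgs(1) full by (auto simp: qf_kernel_def)
  then show "h \<in> W2 n d (qf_kernel n d l)" unfolding W2_def using he by blast
qed

lemma not_hyper_if_full:
  assumes full: "\<forall>p\<in>forms n d. \<forall>q\<in>forms n d. l (Sym n (p * q)) = 0"
  shows "\<not> hyperplane_in (sym_forms n (2*d)) (W2 n d (qf_kernel n d l))"
proof
  assume "hyperplane_in (sym_forms n (2*d)) (W2 n d (qf_kernel n d l))"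
  then obtain \<phi> :: "rpoly \<Rightarrow> real" and f where f: "f \<in> sym_forms n (2*d)" "\<phi> f \<noteq> 0"
    and eq: "W2 n d (qf_kernel n d l) = {f \<in> sym_forms n (2*d). \<phi> f = 0}"
    unfolding hyperplane_in_def by blast
  have "f \<in> W2 n d (qf_kernel n d l)" using full_kernel[OF full] f(1) by blast
  then show False using eq f by blast
qed

lemma prop_lemma:
  assumes V: "PV.subspace V" and phi: "linear_on V \<phi>" and f0: "f0 \<in> V" "\<phi> f0 \<noteq> 0"
    and psi: "linear_on V \<psi>" and van: "\<forall>f\<in>V. \<phi> f = 0 \<longrightarrow> \<psi> f = 0" and f: "f \<in> V"
  shows "\<psi> f = (\<psi> f0 / \<phi> f0) * \<phi> f"
proof -
  define c where "c = - (\<phi> f / \<phi> f0)"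
  have cf0: "pscale c f0 \<in> V" using V f0(1) by (rule PV.subspace_scale)
  have g: "f + pscale c f0 \<in> V" using V f cf0 by (rule PV.subspace_add)
  have "\<phi> (f + pscale c f0) = \<phi> f + c * \<phi> f0" using phi f cf0 f0(1) by (simp add: linear_on_def)
  also have "\<dots> = 0" using f0(2) by (simp add: c_def)
  finally have "\<psi> (f + pscale c f0) = 0" using van g by blast
  moreover have "\<psi> (f + pscale c f0) = \<psi> f + c * \<psi> f0" using psi f cf0 f0(1) by (simp add: linear_on_def)
  ultimately have "\<psi> f = - c * \<psi> f0" by simp
  then show ?thesis using f0(2) by (simp add: c_def field_simps)
qed

lemma dual_cone_intro:
  assumes lin: "linear_on (sym_forms n (2*d)) \<phi>" and nn: "\<forall>g\<in>forms n d. 0 \<le> \<phi> (Sym n (g * g))"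
  shows "\<phi> \<in> dual_cone n d"
  unfolding dual_cone_def
proof (intro CollectI conjI ballI lin)
  fix f assume "f \<in> sym_sos n d"
  from sym_sos_decomp[OF this] obtain gs where gs: "set gs \<subseteq> forms n d"
    "f = sum_list (map (\<lambda>g. Sym n (g * g)) gs)" by (elim exE conjE)
  have inV: "set (map (\<lambda>g. Sym n (g * g)) gs) \<subseteq> sym_forms n (2*d)" using gs(1) by (auto intro: Sym_prod_V)
  have "\<phi> f = sum_list (map \<phi> (map (\<lambda>g. Sym n (g * g)) gs))"
    unfolding gs(2) by (rule lin_sum_list[OF lin sym_forms_subspace inV])
  also have "\<dots> \<ge> 0" using gs(1) nn by (intro sum_list_nonneg) auto
  finally show "0 \<le> \<phi> f" .
qed



theorem corollary6p6:
  fixes n d :: nat and l :: "rpoly \<Rightarrow> real"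
  assumes "l \<in> dual_cone n d"
  shows "extreme_ray (sym_forms n (2*d)) (dual_cone n d) l \<longleftrightarrow>
         hyperplane_in (sym_forms n (2*d)) (W2 n d (qf_kernel n d l))"
proof -
  let ?V = "sym_forms n (2*d)"
  let ?H = "forms n d"
  let ?W = "qf_kernel n d l"
  let ?Q = "\<lambda>p q. l (Sym n (p * q))"
  have Vs: "PV.subspace ?V" by (rule sym_forms_subspace)
  have Hs: "PV.subspace ?H" by (rule forms_subspace)
  have linl: "linear_on ?V l" and posl: "\<forall>f\<in>sym_sos n d. 0 \<le> l f"
    using assms by (auto simp: dual_cone_def)
  have WH: "?W \<subseteq> ?H" by (auto simp: qf_kernel_def)
  have Ql: "bilin ?H ?Q" by (rule bilin_of_lin[OF linl])
  have psdl: "\<forall>x\<in>?H. 0 \<le> ?Q x x" using posl Sym_sq_sos by blast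
  have lW2: "l x = 0" if "x \<in> W2 n d ?W" for x
    by (rule lin_vanish_W2[OF linl WH _ that]) (auto simp: qf_kernel_def)
  have W2V: "W2 n d ?W \<subseteq> ?V" by (rule W2_sub_V[OF WH])
  have kerW: "w \<in> ?W" if w: "w \<in> ?H" and ww: "?Q w w = 0" for w
    using psd_kernel[OF Hs Ql psdl w ww] w by (auto simp: qf_kernel_def)
  show ?thesis
  proof
    assume ext: "extreme_ray ?V (dual_cone n d) l"
    from ext obtain f1 where f1: "f1 \<in> ?V" "l f1 \<noteq> 0" unfolding extreme_ray_def by blast
    have extr: "\<And>l1 l2. l1 \<in> dual_cone n d \<Longrightarrow> l2 \<in> dual_cone n d \<Longrightarrow> (\<forall>f\<in>?V. l f = l1 f + l2 f) \<Longrightarrow>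
        \<exists>c\<ge>0. \<forall>f\<in>?V. l1 f = c * l f"
      using ext unfolding extreme_ray_def by blast
    have sub2: "{f \<in> ?V. l f = 0} \<subseteq> W2 n d ?W"
    proof (rule subsetI, rule ccontr)
      fix h assume h: "h \<in> {f \<in> ?V. l f = 0}" and hn: "h \<notin> W2 n d ?W"
      have hV: "h \<in> ?V" and lh: "l h = 0" using h by auto
      obtain Bs where Bs: "Bs \<subseteq> W2 n d ?W" "PV.independent Bs" "W2 n d ?W \<subseteq> PV.span Bs"
        by (rule PV.maximal_independent_subset)
      have spanBs: "PV.span Bs \<subseteq> W2 n d ?W" by (rule PV.span_minimal[OF Bs(1) W2_subspace[OF WH]])
      have hnB: "h \<notin> PV.span Bs" using hn spanBs by blast
      have ind: "PV.independent (insert h Bs)" by (rule PV.independent_insertI[OF hnB Bs(2)])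
      obtain m where mlin: "Vector_Spaces.linear pscale (*) m"
        and mval: "\<forall>x\<in>insert h Bs. m x = (if x = h then 1 else 0)"
        using vector_space_pair.linear_independent_extend[OF PVP ind, of "\<lambda>x. if x = h then 1 else (0::real)"]
        by (elim exE conjE)
      have mhom: "module_hom pscale (*) m" using mlin by (simp add: module_hom_iff_linear)
      have madd: "m (x + y) = m x + m y" for x y using module_hom.add[OF mhom] .
      have mscale: "m (pscale c x) = c * m x" for c x using module_hom.scale[OF mhom] .
      have m0: "m 0 = 0" using module_hom.zero[OF mhom] .
      have mh: "m h = 1" using mval by simp
      have mBs: "m x = 0" if "x \<in> Bs" for x
      proof -
        have "x \<noteq> h" using that hnB PV.span_base by blast
        then show ?thesis using mval that by auto
      qed
      have mspan: "m x = 0" if "x \<in> PV.span Bs" for x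
        using that
      proof (induction rule: PV.span_induct_alt)
        case base then show ?case by (rule m0)
      next
        case (step c x y) then show ?case by (simp add: madd mscale mBs)
      qed
      have mW2: "m x = 0" if "x \<in> W2 n d ?W" for x using that Bs(3) mspan by blast
      have linm: "linear_on ?V m" by (simp add: linear_on_def madd mscale)
      let ?B = "\<lambda>p q. m (Sym n (p * q))"
      have Bm: "bilin ?H ?B" by (rule bilin_of_lin[OF linm])
      have kerB: "\<forall>w\<in>?H. ?Q w w = 0 \<longrightarrow> (\<forall>x\<in>?H. ?B w x = 0)"
      proof (intro ballI impI)
        fix w x assume w: "w \<in> ?H" and ww: "?Q w w = 0" and x: "x \<in> ?H"
        have wW: "w \<in> ?W" by (rule kerW[OF w ww])
        have "Sym n (w * x) \<in> W2 n d ?W" unfolding W2_def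
          by (rule CollectI, rule exI[of _ "[(w, x)]"]) (use wW x in simp)
        then show "?B w x = 0" by (rule mW2)
      qed
      obtain es where es: "set es \<subseteq> ?H" "?H \<subseteq> PV.span (set es)"
        using forms_span[of n d] by (elim exE conjE)
      obtain C where C: "\<forall>g\<in>PV.span (set es). \<bar>?B g g\<bar> \<le> C * ?Q g g"
        using bound_lemma[OF refl Hs Ql psdl es(1) Bm kerB] by (elim exE)
      define \<epsilon> where "\<epsilon> = 1 / (\<bar>C\<bar> + 1)"
      have eps: "\<epsilon> > 0" by (simp add: \<epsilon>_def)
      have key: "\<epsilon> * \<bar>?B g g\<bar> \<le> ?Q g g" if g: "g \<in> ?H" for g
      proof -
        have q0: "0 \<le> ?Q g g" using psdl g by blast
        have "\<bar>?B g g\<bar> \<le> C * ?Q g g" using C es(2) g by blast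
        also have "\<dots> \<le> (\<bar>C\<bar> + 1) * ?Q g g" using q0 by (intro mult_right_mono) auto
        finally have "\<bar>?B g g\<bar> \<le> (\<bar>C\<bar> + 1) * ?Q g g" .
        then have "\<bar>?B g g\<bar> / (\<bar>C\<bar> + 1) \<le> ?Q g g"
          using pos_divide_le_eq[of "\<bar>C\<bar> + 1"] by (simp add: mult.commute add_pos_nonneg)
        then show ?thesis by (simp add: \<epsilon>_def)
      qed
      define l1 where "l1 = (\<lambda>f. (l f + \<epsilon> * m f) / 2)"
      define l2 where "l2 = (\<lambda>f. (l f - \<epsilon> * m f) / 2)"
      have lin1: "linear_on ?V l1" unfolding linear_on_def
      proof (intro conjI ballI allI)
        fix x y assume x: "x \<in> ?V" and y: "y \<in> ?V"
        have "l (x + y) = l x + l y" using linl x y by (simp add: linear_on_def)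
        then show "l1 (x + y) = l1 x + l1 y" by (simp add: l1_def madd field_simps)
      next
        fix c x assume x: "x \<in> ?V"
        have "l (pscale c x) = c * l x" using linl x by (simp add: linear_on_def)
        then show "l1 (pscale c x) = c * l1 x" by (simp add: l1_def mscale field_simps)
      qed
      have lin2: "linear_on ?V l2" unfolding linear_on_def
      proof (intro conjI ballI allI)
        fix x y assume x: "x \<in> ?V" and y: "y \<in> ?V"
        have "l (x + y) = l x + l y" using linl x y by (simp add: linear_on_def)
        then show "l2 (x + y) = l2 x + l2 y" by (simp add: l2_def madd field_simps)
      next
        fix c x assume x: "x \<in> ?V"
        have "l (pscale c x) = c * l x" using linl x by (simp add: linear_on_def)
        then show "l2 (pscale c x) = c * l2 x" by (simp add: l2_def mscale field_simps)
      qed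
      have K1: "l1 \<in> dual_cone n d"
      proof (rule dual_cone_intro[OF lin1], intro ballI)
        fix g assume g: "g \<in> ?H"
        have "\<epsilon> * (- m (Sym n (g * g))) \<le> \<epsilon> * \<bar>m (Sym n (g * g))\<bar>"
          using eps abs_ge_minus_self by (intro mult_left_mono) auto
        then have "- (\<epsilon> * m (Sym n (g * g))) \<le> l (Sym n (g * g))"
          using key[OF g] by linarith
        then show "0 \<le> l1 (Sym n (g * g))" by (simp add: l1_def)
      qed
      have K2: "l2 \<in> dual_cone n d"
      proof (rule dual_cone_intro[OF lin2], intro ballI)
        fix g assume g: "g \<in> ?H"
        have "\<epsilon> * m (Sym n (g * g)) \<le> \<epsilon> * \<bar>m (Sym n (g * g))\<bar>"
          using eps abs_ge_self by (intro mult_left_mono) auto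
        then have "\<epsilon> * m (Sym n (g * g)) \<le> l (Sym n (g * g))"
          using key[OF g] by linarith
        then show "0 \<le> l2 (Sym n (g * g))" by (simp add: l2_def)
      qed
      have "\<forall>f\<in>?V. l f = l1 f + l2 f" by (simp add: l1_def l2_def field_simps)
      from extr[OF K1 K2 this] obtain c where "c \<ge> 0" "\<forall>f\<in>?V. l1 f = c * l f" by (elim exE conjE)
      then have "l1 h = c * l h" using hV by blast
      then show False using lh mh eps by (simp add: l1_def)
    qed
    show "hyperplane_in ?V (W2 n d ?W)"
      unfolding hyperplane_in_def
    proof (intro exI conjI)
      show "linear_on ?V l" by (rule linl)
      show "\<exists>f\<in>?V. l f \<noteq> 0" using f1 by blast
      show "W2 n d ?W = {f \<in> ?V. l f = 0}"
        using sub2 W2V lW2 by blast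
    qed
  next
    assume hyp: "hyperplane_in ?V (W2 n d ?W)"
    then obtain \<phi> :: "rpoly \<Rightarrow> real" and f0 where phi: "linear_on ?V \<phi>" and f0: "f0 \<in> ?V" "\<phi> f0 \<noteq> 0"
      and W2eq: "W2 n d ?W = {f \<in> ?V. \<phi> f = 0}"
      unfolding hyperplane_in_def by blast
    have notfull: "\<not> (\<forall>p\<in>?H. \<forall>q\<in>?H. ?Q p q = 0)"
      using not_hyper_if_full hyp by blast
    have lnz: "\<exists>f\<in>?V. l f \<noteq> 0"
    proof (rule ccontr)
      assume "\<not> (\<exists>f\<in>?V. l f \<noteq> 0)"
      then have "\<forall>p\<in>?H. \<forall>q\<in>?H. ?Q p q = 0" using Sym_prod_V by blast
      then show False using notfull by blast
    qed
    have lprop: "\<forall>f\<in>?V. l f = (l f0 / \<phi> f0) * \<phi> f"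
      using prop_lemma[OF Vs phi f0 linl] lW2 W2eq by blast
    have beta: "l f0 / \<phi> f0 \<noteq> 0"
    proof
      assume "l f0 / \<phi> f0 = 0"
      then show False using lprop lnz by auto
    qed
    show "extreme_ray ?V (dual_cone n d) l"
      unfolding extreme_ray_def
    proof (intro conjI ballI impI)
      show "l \<in> dual_cone n d" by (rule assms)
      show "\<exists>f\<in>?V. l f \<noteq> 0" by (rule lnz)
    next
      fix l1 l2 assume K1: "l1 \<in> dual_cone n d" and K2: "l2 \<in> dual_cone n d"
        and sum: "\<forall>f\<in>?V. l f = l1 f + l2 f"
      have lin1: "linear_on ?V l1" and pos1: "\<forall>f\<in>sym_sos n d. 0 \<le> l1 f" using K1 by (auto simp: dual_cone_def)
      have pos2: "\<forall>f\<in>sym_sos n d. 0 \<le> l2 f" using K2 by (auto simp: dual_cone_def)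
      have Q1: "bilin ?H (\<lambda>p q. l1 (Sym n (p * q)))" by (rule bilin_of_lin[OF lin1])
      have psd1: "\<forall>x\<in>?H. 0 \<le> l1 (Sym n (x * x))" using pos1 Sym_sq_sos by blast
      have psd2: "\<forall>x\<in>?H. 0 \<le> l2 (Sym n (x * x))" using pos2 Sym_sq_sos by blast
      have van1: "\<forall>f\<in>?W. \<forall>g\<in>?H. l1 (Sym n (f * g)) = 0"
      proof (intro ballI)
        fix f g assume f: "f \<in> ?W" and g: "g \<in> ?H"
        have fH: "f \<in> ?H" using f WH by blast
        have "?Q f f = 0" using f fH by (simp add: qf_kernel_def)
        moreover have "?Q f f = l1 (Sym n (f * f)) + l2 (Sym n (f * f))" using sum Sym_prod_V[OF fH fH] by blast
        ultimately have "l1 (Sym n (f * f)) = 0" using psd1 psd2 fH by (smt (verit))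
        then show "l1 (Sym n (f * g)) = 0" by (rule psd_kernel[OF Hs Q1 psd1 fH _ g])
      qed
      have l1W2: "\<forall>f\<in>?V. \<phi> f = 0 \<longrightarrow> l1 f = 0"
        using lin_vanish_W2[OF lin1 WH van1] W2eq by blast
      have l1prop: "\<forall>f\<in>?V. l1 f = (l1 f0 / \<phi> f0) * \<phi> f"
        using prop_lemma[OF Vs phi f0 lin1 l1W2] by blast
      define c where "c = (l1 f0 / \<phi> f0) / (l f0 / \<phi> f0)"
      have l1c: "\<forall>f\<in>?V. l1 f = c * l f"
      proof
        fix f assume f: "f \<in> ?V"
        show "l1 f = c * l f" using l1prop f lprop beta by (simp add: c_def)
      qed
      have c0: "c \<ge> 0"
      proof (rule ccontr)
        assume cn: "\<not> c \<ge> 0"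
        have allz: "\<forall>g\<in>?H. ?Q g g = 0"
        proof
          fix g assume g: "g \<in> ?H"
          have "l1 (Sym n (g * g)) = c * ?Q g g" using l1c Sym_prod_V[OF g g] by blast
          moreover have "0 \<le> l1 (Sym n (g * g))" using psd1 g by blast
          moreover have "0 \<le> ?Q g g" using psdl g by blast
          ultimately show "?Q g g = 0" using cn by (smt (verit) mult_neg_pos)
        qed
        have "\<forall>p\<in>?H. \<forall>q\<in>?H. ?Q p q = 0"
          using psd_kernel[OF Hs Ql psdl] allz by blast
        then show False using notfull by blast
      qed
      show "\<exists>c\<ge>0. \<forall>f\<in>?V. l1 f = c * l f" using c0 l1c by blast
    qed
  qed
qed


end
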